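(* For every set $\theta$ of edges of $G$, $H$ is constant on each connected component of $\Gamma_\theta=\{x\in\Gamma: E_x=\theta\}$, where $E_x=\{\{i,j\}\in E: x_{ij}>0\}$.
   Context: Let $G=(\mathbb{V},E)$ be a finite graph with adjacency $\sim$ and edge set $E$. Let $a_{ij}=a_{ji}\ge0$ ($>0$ only if $i\sim j$) and $p_{ij}=p_{ji}\in[0,1]$ ($=0$ if $i\not\sim j$), with some $a_{ij}p_{ij}>0$. Fix $h_1\in(0,1]$; $\Delta$ is the set of arrays $x=(x_{ij})$ with $x_{ij}=x_{ji}\ge0$, $x_{ij}=0$ if $i\not\sim j$, $\sum_{i,j}x_{ij}=1$, $\sum_{(i,j):a_{ij}p_{ij}>0}x_{ij}\ge h_1$; $x_i=\sum_jx_{ij}$. $H(x)=\sum_{(i,j):x_{ij}>0}a_{ij}p_{ij}x_{ij}^2/(x_ix_j)$; $F(x)_{ij}=x_{ij}\big(a_{ij}p_{ij}\frac{x_{ij}}{x_ix_j}-H(x)\big)$, with $F_{ij}=0$ if $x_{ij}=0$ and $a_{ij}p_{ij}x_{ij}/(x_ix_j):=0$ if $a_{ij}p_{ij}=0$. $\Gamma=\{x\in\Delta:F(x)=0\}$. *)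

theory Defs
  imports "HOL-Analysis.Analysis"
begin

text \<open>Vertices form a finite type 'v; arrays x = (x_ij) are functions on ordered pairs,
  carrying the product (= Euclidean) topology. adj is the adjacency relation of G.\<close>

definition marg :: "('v::finite \<times> 'v \<Rightarrow> real) \<Rightarrow> 'v \<Rightarrow> real" where
  "marg x i = (\<Sum>j\<in>UNIV. x (i, j))"

definition Hfun :: "('v::finite \<times> 'v \<Rightarrow> real) \<Rightarrow> ('v \<times> 'v \<Rightarrow> real)
    \<Rightarrow> ('v \<times> 'v \<Rightarrow> real) \<Rightarrow> real" where
  "Hfun a p x = (\<Sum>(i, j)\<in>{(i, j). x (i, j) > 0}.
      a (i, j) * p (i, j) * (x (i, j))^2 / (marg x i * marg x j))"

definition Ffun :: "('v::finite \<times> 'v \<Rightarrow> real) \<Rightarrow> ('v \<times> 'v \<Rightarrow> real)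
    \<Rightarrow> ('v \<times> 'v \<Rightarrow> real) \<Rightarrow> ('v \<times> 'v \<Rightarrow> real)" where
  "Ffun a p x = (\<lambda>(i, j). if x (i, j) = 0 then 0
      else x (i, j) * (a (i, j) * p (i, j) * x (i, j) / (marg x i * marg x j) - Hfun a p x))"

definition Delta :: "('v::finite \<Rightarrow> 'v \<Rightarrow> bool) \<Rightarrow> ('v \<times> 'v \<Rightarrow> real)
    \<Rightarrow> ('v \<times> 'v \<Rightarrow> real) \<Rightarrow> real \<Rightarrow> ('v \<times> 'v \<Rightarrow> real) set" where
  "Delta adj a p h1 = {x. (\<forall>i j. x (i, j) = x (j, i)) \<and> (\<forall>i j. x (i, j) \<ge> 0)
      \<and> (\<forall>i j. \<not> adj i j \<longrightarrow> x (i, j) = 0)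
      \<and> (\<Sum>ij\<in>UNIV. x ij) = 1
      \<and> (\<Sum>ij\<in>{ij. a ij * p ij > 0}. x ij) \<ge> h1}"

definition Gamma :: "('v::finite \<Rightarrow> 'v \<Rightarrow> bool) \<Rightarrow> ('v \<times> 'v \<Rightarrow> real)
    \<Rightarrow> ('v \<times> 'v \<Rightarrow> real) \<Rightarrow> real \<Rightarrow> ('v \<times> 'v \<Rightarrow> real) set" where
  "Gamma adj a p h1 = {x \<in> Delta adj a p h1. Ffun a p x = (\<lambda>_. 0)}"

definition edge_set :: "('v \<Rightarrow> 'v \<Rightarrow> bool) \<Rightarrow> 'v set set" where
  "edge_set adj = {{i, j} | i j. adj i j}"

definition supp_edges :: "('v \<Rightarrow> 'v \<Rightarrow> bool) \<Rightarrow> ('v \<times> 'v \<Rightarrow> real) \<Rightarrow> 'v set set" where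
  "supp_edges adj x = {{i, j} | i j. adj i j \<and> x (i, j) > 0}"

definition Gamma_theta :: "('v::finite \<Rightarrow> 'v \<Rightarrow> bool) \<Rightarrow> ('v \<times> 'v \<Rightarrow> real)
    \<Rightarrow> ('v \<times> 'v \<Rightarrow> real) \<Rightarrow> real \<Rightarrow> 'v set set \<Rightarrow> ('v \<times> 'v \<Rightarrow> real) set" where
  "Gamma_theta adj a p h1 \<theta> = {x \<in> Gamma adj a p h1. supp_edges adj x = \<theta>}"

end

theory Submission
  imports Defs
begin

lemma sum_pairs_UNIV:
  fixes g :: "'v::finite \<times> 'v \<Rightarrow> real"
  shows "(\<Sum>ij\<in>UNIV. g ij) = (\<Sum>i\<in>UNIV. \<Sum>j\<in>UNIV. g (i, j))"
  by (simp add: sum.cartesian_product flip: UNIV_Times_UNIV)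

lemma keyL:
  fixes x y :: "'v::finite \<times> 'v \<Rightarrow> real" and c :: "'v \<times> 'v \<Rightarrow> real"
  assumes xnn: "\<And>ij. x ij \<ge> 0" and ynn: "\<And>ij. y ij \<ge> 0"
    and ysym: "\<And>i j. y (i, j) = y (j, i)"
    and xsum: "(\<Sum>ij\<in>UNIV. x ij) = 1"
    and supp: "\<And>ij. x ij > 0 \<longleftrightarrow> y ij > 0"
    and crit: "\<And>i j. y (i, j) > 0 \<Longrightarrow> c (i, j) * y (i, j) / (marg y i * marg y j) = H"
    and cnz: "\<And>ij. y ij > 0 \<Longrightarrow> c ij \<noteq> 0"
  shows "H * (\<Sum>(i, j)\<in>{ij. y ij > 0}. marg x i * marg y j / c (i, j)) = 1"
proof -
  have mpos: "marg y i > 0" if "y (i, j) > 0" for i j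
  proof -
    have "y (i, j) \<le> marg y i" unfolding marg_def
      by (rule member_le_sum) (auto simp: ynn)
    thus ?thesis using that by simp
  qed
  have step: "H * (marg x i * marg y j / c (i, j)) = marg x i * y (i, j) / marg y i"
    if "(i, j) \<in> {ij. y ij > 0}" for i j
  proof -
    have yp: "y (i, j) > 0" using that by simp
    have c: "c (i, j) \<noteq> 0" using cnz[OF yp] .
    have mi: "marg y i > 0" using mpos[OF yp] .
    have mj: "marg y j > 0" using mpos[of j i] yp ysym by simp
    have "H = c (i, j) * y (i, j) / (marg y i * marg y j)" using crit[OF yp] by simp
    thus ?thesis using c mi mj by (simp add: field_simps)
  qed
  have "H * (\<Sum>(i, j)\<in>{ij. y ij > 0}. marg x i * marg y j / c (i, j))
      = (\<Sum>(i, j)\<in>{ij. y ij > 0}. H * (marg x i * marg y j / c (i, j)))"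
    by (simp add: sum_distrib_left case_prod_unfold)
  also have "\<dots> = (\<Sum>(i, j)\<in>{ij. y ij > 0}. marg x i * y (i, j) / marg y i)"
  proof (rule sum.cong)
    fix ij assume "ij \<in> {ij. y ij > 0}"
    then show "(case ij of (i, j) \<Rightarrow> H * (marg x i * marg y j / c (i, j))) =
        (case ij of (i, j) \<Rightarrow> marg x i * y (i, j) / marg y i)"
      using step by (cases ij) simp
  qed simp
  also have "\<dots> = (\<Sum>(i, j)\<in>UNIV. marg x i * y (i, j) / marg y i)"
  proof (rule sum.mono_neutral_left)
    show "\<forall>ij\<in>UNIV - {ij. y ij > 0}. (case ij of (i, j) \<Rightarrow> marg x i * y (i, j) / marg y i) = 0"
    proof
      fix ij assume "ij \<in> UNIV - {ij. y ij > 0}"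
      then have "y ij = 0" using ynn[of ij] by auto
      thus "(case ij of (i, j) \<Rightarrow> marg x i * y (i, j) / marg y i) = 0" by (cases ij) simp
    qed
  qed auto
  also have "\<dots> = (\<Sum>i\<in>UNIV. \<Sum>j\<in>UNIV. marg x i * y (i, j) / marg y i)"
    using sum_pairs_UNIV[of "\<lambda>(i,j). marg x i * y (i, j) / marg y i"] by simp
  also have "\<dots> = (\<Sum>i\<in>UNIV. marg x i)"
  proof (rule sum.cong)
    fix i :: 'v
    have e: "(\<Sum>j\<in>UNIV. marg x i * y (i, j) / marg y i) = marg x i * marg y i / marg y i"
      unfolding marg_def by (simp add: sum_distrib_left sum_divide_distrib)
    show "(\<Sum>j\<in>UNIV. marg x i * y (i, j) / marg y i) = marg x i"
    proof (cases "marg y i = 0")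
      case True
      then have "\<forall>j\<in>UNIV. y (i, j) = 0" unfolding marg_def
        using sum_nonneg_eq_0_iff[of UNIV "\<lambda>j. y (i, j)"] ynn by auto
      then have "\<forall>j. x (i, j) = 0"
      proof (intro allI)
        fix j assume "\<forall>j\<in>UNIV. y (i, j) = 0"
        then have "\<not> y (i, j) > 0" by simp
        then have "\<not> x (i, j) > 0" using supp[of "(i,j)"] by simp
        thus "x (i, j) = 0" using xnn[of "(i,j)"] by simp
      qed
      then have "marg x i = 0" unfolding marg_def by simp
      thus ?thesis by simp
    next
      case False
      thus ?thesis using e by simp
    qed
  qed simp
  also have "\<dots> = 1" using xsum sum_pairs_UNIV[of x] unfolding marg_def by simp
  finally show ?thesis .
qed

lemma Gamma_props:
  assumes "x \<in> Gamma adj a p h1"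
  shows "\<And>ij. x ij \<ge> 0" "\<And>i j. x (i, j) = x (j, i)" "(\<Sum>ij\<in>UNIV. x ij) = 1"
    "\<And>i j. \<not> adj i j \<Longrightarrow> x (i, j) = 0"
    "\<And>i j. x (i, j) > 0 \<Longrightarrow> a (i, j) * p (i, j) * x (i, j) / (marg x i * marg x j) = Hfun a p x"
proof -
  have D: "x \<in> Delta adj a p h1" and F: "Ffun a p x = (\<lambda>_. 0)"
    using assms unfolding Gamma_def by auto
  show "\<And>ij. x ij \<ge> 0" using D unfolding Delta_def by auto
  show "\<And>i j. x (i, j) = x (j, i)" using D unfolding Delta_def by auto
  show "(\<Sum>ij\<in>UNIV. x ij) = 1" using D unfolding Delta_def by auto
  show "\<And>i j. \<not> adj i j \<Longrightarrow> x (i, j) = 0" using D unfolding Delta_def by auto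
  show "\<And>i j. x (i, j) > 0 \<Longrightarrow> a (i, j) * p (i, j) * x (i, j) / (marg x i * marg x j) = Hfun a p x"
  proof -
    fix i j assume xp: "x (i, j) > 0"
    have "Ffun a p x (i, j) = 0" using F by simp
    then have "x (i, j) * (a (i, j) * p (i, j) * x (i, j) / (marg x i * marg x j) - Hfun a p x) = 0"
      using xp unfolding Ffun_def by simp
    thus "a (i, j) * p (i, j) * x (i, j) / (marg x i * marg x j) = Hfun a p x" using xp by simp
  qed
qed

theorem lemma8:
  fixes adj :: "'v::finite \<Rightarrow> 'v \<Rightarrow> bool"
    and a p :: "'v \<times> 'v \<Rightarrow> real" and h1 :: real and \<theta> :: "'v set set"
  assumes adj_sym: "\<And>i j. adj i j = adj j i"
    and a_sym: "\<And>i j. a (i, j) = a (j, i)" and a_nonneg: "\<And>i j. a (i, j) \<ge> 0"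
    and a_adj: "\<And>i j. a (i, j) > 0 \<Longrightarrow> adj i j"
    and p_sym: "\<And>i j. p (i, j) = p (j, i)"
    and p_range: "\<And>i j. 0 \<le> p (i, j) \<and> p (i, j) \<le> 1"
    and p_adj: "\<And>i j. \<not> adj i j \<Longrightarrow> p (i, j) = 0"
    and ap_pos: "\<exists>i j. a (i, j) * p (i, j) > 0"
    and h1: "0 < h1" "h1 \<le> 1"
    and theta: "\<theta> \<subseteq> edge_set adj"
    and x: "x \<in> Gamma_theta adj a p h1 \<theta>"
    and y: "y \<in> connected_component_set (Gamma_theta adj a p h1 \<theta>) x"
  shows "Hfun a p y = Hfun a p x"
proof -
  have yT: "y \<in> Gamma_theta adj a p h1 \<theta>" using y connected_component_subset by blast
  have xG: "x \<in> Gamma adj a p h1" and sx: "supp_edges adj x = \<theta>"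
    using x unfolding Gamma_theta_def by auto
  have yG: "y \<in> Gamma adj a p h1" and sy: "supp_edges adj y = \<theta>"
    using yT unfolding Gamma_theta_def by auto
  note X = Gamma_props[OF xG] and Y = Gamma_props[OF yG]
  have suppgen: "v (i, j) > 0"
    if uG: "u \<in> Gamma adj a p h1" and vG: "v \<in> Gamma adj a p h1"
      and eq: "supp_edges adj u = supp_edges adj v" and up: "u (i, j) > 0" for u v i j
  proof -
    note U = Gamma_props[OF uG] and V = Gamma_props[OF vG]
    have "adj i j" using U(4)[of i j] up by force
    then have "{i, j} \<in> supp_edges adj u" unfolding supp_edges_def using up by blast
    then have "{i, j} \<in> supp_edges adj v" using eq by simp
    then obtain k l where kl: "{i, j} = {k, l}" "v (k, l) > 0" unfolding supp_edges_def by blast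
    from kl(1) have "(i = k \<and> j = l) \<or> (i = l \<and> j = k)" by (auto simp: doubleton_eq_iff)
    thus ?thesis using kl(2) V(2)[of k l] by auto
  qed
  have supp: "\<And>ij. x ij > 0 \<longleftrightarrow> y ij > 0"
    using suppgen[OF xG yG] suppgen[OF yG xG] sx sy by auto
  define c where "c = (\<lambda>ij. a ij * p ij)"
  show ?thesis
  proof (cases "\<exists>ij. y ij > 0 \<and> c ij = 0")
    case True
    then obtain i j where ij: "y (i, j) > 0" "c (i, j) = 0" by auto
    have hy: "Hfun a p y = 0" using Y(5)[OF ij(1)] ij(2) by (auto simp add: c_def)
    have xp: "x (i, j) > 0" using supp[of "(i,j)"] ij(1) by simp
    have "Hfun a p x = 0" using X(5)[OF xp] ij(2) by (auto simp add: c_def)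
    then show ?thesis using hy by simp
  next
    case False
    then have cy: "\<And>ij. y ij > 0 \<Longrightarrow> c ij \<noteq> 0" by auto
    have cx: "\<And>ij. x ij > 0 \<Longrightarrow> c ij \<noteq> 0" using cy supp by blast
    have L1: "Hfun a p y * (\<Sum>(i, j)\<in>{ij. y ij > 0}. marg x i * marg y j / c (i, j)) = 1"
      by (rule keyL[OF X(1) Y(1) Y(2) X(3) supp _ cy]) (use Y(5) in \<open>simp add: c_def\<close>)
    have L2: "Hfun a p x * (\<Sum>(i, j)\<in>{ij. x ij > 0}. marg y i * marg x j / c (i, j)) = 1"
    proof (rule keyL[of y x c "Hfun a p x"])
      show "\<And>ij. 0 \<le> y ij" by (rule Y(1))
      show "\<And>ij. 0 \<le> x ij" by (rule X(1))
      show "\<And>i j. x (i, j) = x (j, i)" by (rule X(2))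
      show "sum y UNIV = 1" by (rule Y(3))
      show "\<And>ij. (0 < y ij) = (0 < x ij)" using supp by simp
      show "\<And>i j. 0 < x (i, j) \<Longrightarrow> c (i, j) * x (i, j) / (marg x i * marg x j) = Hfun a p x"
        using X(5) by (simp add: c_def)
      show "\<And>ij. 0 < x ij \<Longrightarrow> c ij \<noteq> 0" by (rule cx)
    qed
    have "(\<Sum>(i, j)\<in>{ij. x ij > 0}. marg y i * marg x j / c (i, j))
        = (\<Sum>(i, j)\<in>{ij. y ij > 0}. marg x i * marg y j / c (i, j))"
    proof (rule sum.reindex_bij_witness[of _ prod.swap prod.swap])
      fix ij :: "'v \<times> 'v" assume h: "ij \<in> {ij. x ij > 0}"
      obtain i j where ij: "ij = (i, j)" by (cases ij)
      show "prod.swap ij \<in> {ij. y ij > 0}" using h ij supp[of "(i,j)"] Y(2)[of i j] by simp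
      show "(case prod.swap ij of (i, j) \<Rightarrow> marg x i * marg y j / c (i, j)) =
          (case ij of (i, j) \<Rightarrow> marg y i * marg x j / c (i, j))"
        using ij a_sym[of i j] p_sym[of i j] by (simp add: c_def mult.commute)
    next
      fix ij :: "'v \<times> 'v" assume h: "ij \<in> {ij. y ij > 0}"
      obtain i j where ij: "ij = (i, j)" by (cases ij)
      show "prod.swap ij \<in> {ij. x ij > 0}" using h ij supp[of "(j,i)"] Y(2)[of i j] by simp
    qed simp_all
    then have "Hfun a p x * (\<Sum>(i, j)\<in>{ij. y ij > 0}. marg x i * marg y j / c (i, j)) = 1"
      using L2 by simp
    then have "Hfun a p x * (\<Sum>(i, j)\<in>{ij. y ij > 0}. marg x i * marg y j / c (i, j))
       = Hfun a p y * (\<Sum>(i, j)\<in>{ij. y ij > 0}. marg x i * marg y j / c (i, j))"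
      using L1 by simp
    moreover have "(\<Sum>(i, j)\<in>{ij. y ij > 0}. marg x i * marg y j / c (i, j)) \<noteq> 0"
      using L1 by auto
    ultimately show ?thesis by simp
  qed
qed

end
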